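(* For every integer $p\ge0$, $$\sum_{k=1}^\infty\frac{1}{(2k-1)(2k)^p(2k+1)}=\begin{cases}\dfrac12-\displaystyle\sum_{j=1}^{p/2}2^{-2j}\zeta(2j), & p\text{ even},\\[8pt] -\dfrac12+\ln 2-\displaystyle\sum_{j=1}^{(p-1)/2}2^{-(2j+1)}\zeta(2j+1), & p\text{ odd},\end{cases}$$ where empty sums are $0$.
   Context: $\zeta(s)=\sum_{k\ge1}k^{-s}$ denotes the Riemann zeta function. *)

theory Defs
  imports "HOL-Analysis.Analysis"
begin

definition zeta :: "real \<Rightarrow> real" where
  "zeta s = (\<Sum>k. 1 / (real (Suc k)) powr s)"

end

theory Submission
  imports Defs "HOL-Real_Asymp.Real_Asymp"
begin

definition T :: "nat \<Rightarrow> nat \<Rightarrow> real" where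
  "T p n = (let k = real (Suc n) in 1 / ((2*k - 1) * (2*k)^p * (2*k + 1)))"

definition R :: "nat \<Rightarrow> real" where
  "R p = (if even p
            then 1/2 - (\<Sum>j=1..p div 2. 2 powr (-(2 * real j)) * zeta (2 * real j))
            else -1/2 + ln 2 - (\<Sum>j=1..(p - 1) div 2. 2 powr (-(2 * real j + 1)) * zeta (2 * real j + 1)))"

lemma id1: fixes x :: real assumes "x \<ge> 0"
  shows "1/2 * (1/(x+1) - 1/(x+2)) - 1/2*((1/(x+1) - 1/(x+3)) - (1/(x+1) - 1/(x+2))) = 1/((x+1)*(x+2)*(x+3))"
proof -
  have "x+1 \<noteq> 0" "x+2 \<noteq> 0" "x+3 \<noteq> 0" using assms by auto
  then show ?thesis by (simp add: divide_simps del: add_divide_eq_iff)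
qed
lemma id2: fixes x :: real assumes "x > 1"
  shows "1/((x-1)*x^(Suc (Suc q))*(x+1)) = 1/((x-1)*x^q*(x+1)) - 1/x^(Suc (Suc q))"
proof -
  have "x - 1 \<noteq> 0" "x \<noteq> 0" "x + 1 \<noteq> 0" "x^q \<noteq> 0" using assms by auto
  then show ?thesis by (simp add: divide_simps) (simp add: algebra_simps power2_eq_square)
qed

lemma tele: "(\<lambda>n. 1 / (2 * real n + 1) - 1 / (2 * real (Suc n) + 1)) sums 1"
proof -
  have "(\<lambda>n. 1 / (2 * real n + 1)) \<longlonglongrightarrow> 0" by real_asymp
  from telescope_sums'[OF this] show ?thesis by simp
qed

lemma T0: "T 0 sums (1/2)"
proof -
  have "(\<lambda>n. 1/2 * (1 / (2 * real n + 1) - 1 / (2 * real (Suc n) + 1))) sums (1/2 * 1)"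
    by (intro sums_mult tele)
  moreover have "1/2 * (1 / (2 * real n + 1) - 1 / (2 * real (Suc n) + 1)) = T 0 n" for n
  proof -
    have "2 * real n + 1 \<noteq> 0" "2 * real n + 3 \<noteq> 0" by (simp_all add: add_nonneg_pos)
    then show ?thesis by (simp add: T_def Let_def divide_simps)
  qed
  ultimately show ?thesis by simp
qed

lemma T1: "T 1 sums (ln 2 - 1/2)"
proof -
  have b: "(\<lambda>n. 1 / (2 * real n + 1) - 1 / (2 * real n + 2)) sums ln 2"
    using alternating_harmonic_series_sums' by (simp add: inverse_eq_divide add.commute)
  have c: "(\<lambda>n. (1 / (2 * real n + 1) - 1 / (2 * real (Suc n) + 1))
              - (1 / (2 * real n + 1) - 1 / (2 * real n + 2))) sums (1 - ln 2)"
    by (intro sums_diff tele b)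
  have "(\<lambda>n. 1/2 * (1 / (2 * real n + 1) - 1 / (2 * real n + 2)) -
        1/2 * ((1 / (2 * real n + 1) - 1 / (2 * real (Suc n) + 1))
              - (1 / (2 * real n + 1) - 1 / (2 * real n + 2)))) sums (1/2 * ln 2 - 1/2 * (1 - ln 2))"
    by (intro sums_diff sums_mult b c)
  moreover have "1/2 * (1 / (2 * real n + 1) - 1 / (2 * real n + 2)) -
        1/2 * ((1 / (2 * real n + 1) - 1 / (2 * real (Suc n) + 1))
              - (1 / (2 * real n + 1) - 1 / (2 * real n + 2))) = T 1 n" for n
    using id1[of "2 * real n"] by (simp add: T_def Let_def algebra_simps)
  ultimately show ?thesis by (simp add: algebra_simps)
qed

lemma zsum: 
  assumes "q \<ge> 2"
  shows "(\<lambda>n. 1 / (2 * real (Suc n)) ^ q) sums (2 powr (- real q) * zeta (real q))"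
proof -
  have s: "summable (\<lambda>n. 1 / real (Suc n) ^ q)"
  proof -
    have "summable (\<lambda>n. 1 / real n ^ q)"
      using inverse_power_summable[OF assms, where 'a=real] by (simp add: inverse_eq_divide)
    then show ?thesis by (subst summable_Suc_iff)
  qed
  have z: "zeta (real q) = (\<Sum>n. 1 / real (Suc n) ^ q)"
    unfolding zeta_def by (simp add: powr_realpow)
  have "(\<lambda>n. 2 powr (- real q) * (1 / real (Suc n) ^ q)) sums (2 powr (- real q) * zeta (real q))"
    unfolding z by (intro sums_mult summable_sums s)
  moreover have "2 powr (- real q) * (1 / real (Suc n) ^ q) = 1 / (2 * real (Suc n)) ^ q" for n
  proof -
    have "2 powr (- real q) * (1 / real (Suc n) ^ q) = 1 / (2 ^ q * real (Suc n) ^ q)"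
      by (simp add: powr_minus powr_realpow divide_simps)
    also have "\<dots> = 1 / (2 * real (Suc n)) ^ q" by (simp only: power_mult_distrib)
    finally show ?thesis .
  qed
  ultimately show ?thesis by simp
qed

lemma Tstep: "T (Suc (Suc q)) n = T q n - 1 / (2 * real (Suc n)) ^ (Suc (Suc q))"
  unfolding T_def Let_def by (rule id2) simp

lemma Rstep: "R (Suc (Suc q)) = R q - 2 powr (- real (Suc (Suc q))) * zeta (real (Suc (Suc q)))"
proof (cases "even q")
  case True
  then obtain m where q: "q = 2*m" by auto
  have "Suc (Suc q) div 2 = Suc m" using q by simp
  then show ?thesis using True q by (simp add: R_def algebra_simps)
next
  case False
  then obtain m where q: "q = 2*m+1" using oddE by blast
  have "(Suc (Suc q) - 1) div 2 = Suc m" "(q - 1) div 2 = m" using q by simp_all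
  then show ?thesis using False q by (simp add: R_def algebra_simps)
qed

lemma main: "T p sums R p"
proof (induction p rule: nat_less_induct)
  case (1 p)
  show ?case
  proof (cases p)
    case 0 then show ?thesis using T0 by (simp add: R_def)
  next
    case (Suc p')
    show ?thesis
    proof (cases p')
      case 0 then show ?thesis using T1 Suc by (simp add: R_def)
    next
      case (Suc q)
      have IH: "T q sums R q" using 1 \<open>p = Suc p'\<close> Suc by simp
      have "(\<lambda>n. T q n - 1 / (2 * real (Suc n)) ^ (Suc (Suc q))) sums
            (R q - 2 powr (- real (Suc (Suc q))) * zeta (real (Suc (Suc q))))"
        by (intro sums_diff IH zsum) simp
      then show ?thesis using \<open>p = Suc p'\<close> Suc by (simp add: Tstep Rstep)
    qed
  qed
qed

theorem corollary2:
  fixes p :: nat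
  shows "(\<lambda>n. let k = real (Suc n) in 1 / ((2*k - 1) * (2*k)^p * (2*k + 1))) sums
           (if even p
            then 1/2 - (\<Sum>j=1..p div 2. 2 powr (-(2 * real j)) * zeta (2 * real j))
            else -1/2 + ln 2 - (\<Sum>j=1..(p - 1) div 2. 2 powr (-(2 * real j + 1)) * zeta (2 * real j + 1)))"
  using main[of p] unfolding T_def[abs_def] R_def .

end
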